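(* Let $a,d$ be real numbers and let $A_{n,k}(a,d)$ be the general Eulerian numbers defined below. Then for every integer $n\ge 0$ and every integer $k$ with $-1\le k\le n-1$, $$A_{n,k}(a,d)=\sum_{i=0}^{k+1}(-1)^i\big[(k+2-i)d-a\big]^n\binom{n+1}{i}.$$
   Context: For real numbers $a,d$, the general Eulerian numbers $A_{n,k}(a,d)$ (integers $n\ge 0$, $k$) are defined by $A_{0,-1}(a,d)=1$, $A_{n,k}(a,d)=0$ whenever $k\ge n$ or $k\le -2$ (in particular $A_{0,k}=0$ for $k\neq -1$), and for $n\ge 1$, $-1\le k\le n-1$: $$A_{n,k}(a,d)=(-a+(k+2)d)A_{n-1,k}(a,d)+(a+(n-k-1)d)A_{n-1,k-1}(a,d).$$ Here $x^0=1$ for all $x$ (including $x=0$). *)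

theory Defs
  imports Complex_Main
begin

fun gen_eulerian :: "real \<Rightarrow> real \<Rightarrow> nat \<Rightarrow> int \<Rightarrow> real" where
  "gen_eulerian a d 0 k = (if k = -1 then 1 else 0)"
| "gen_eulerian a d (Suc m) k =
     (if k \<ge> int (Suc m) \<or> k \<le> -2 then 0
      else (- a + of_int (k + 2) * d) * gen_eulerian a d m k
         + (a + of_int (int (Suc m) - k - 1) * d) * gen_eulerian a d m (k - 1))"

end

theory Submission
  imports Defs
begin

definition T :: "real \<Rightarrow> real \<Rightarrow> nat \<Rightarrow> nat \<Rightarrow> real" where
  "T a d n m = (\<Sum>i = 0..m. (-1) ^ i * (of_nat (m + 1 - i) * d - a) ^ n * of_nat ((n + 1) choose i))"

lemma choose_aux: "real (Suc i) * real (Suc n choose Suc i) = (real n + 1 - real i) * real (Suc n choose i)"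
proof (cases "i \<le> n")
  case True
  have "(Suc n - i) * (Suc n choose i) = Suc n * (n choose i)"
    using binomial_absorb_comp[of "Suc n" i] by simp
  also have "\<dots> = (Suc n choose Suc i) * Suc i" by (rule Suc_times_binomial_eq)
  finally have "real ((Suc n - i) * (Suc n choose i)) = real ((Suc n choose Suc i) * Suc i)" by simp
  then have "real (Suc n - i) * real (Suc n choose i) = real (Suc n choose Suc i) * real (Suc i)"
    by (simp only: of_nat_mult)
  moreover have "real (Suc n - i) = real n + 1 - real i" using True by (simp add: of_nat_diff)
  ultimately show ?thesis by (simp only: mult.commute)
next
  case False
  then have "Suc n < Suc i" by simp
  then have z: "Suc n choose Suc i = 0" by simp
  show ?thesis
  proof (cases "i = Suc n")
    case True then show ?thesis using z by (simp del: binomial_Suc_Suc)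
  next
    case False
    with \<open>\<not> i \<le> n\<close> have "Suc n < i" by simp
    then have z2: "Suc n choose i = 0" by simp
    show ?thesis by (simp only: z z2 of_nat_0 mult_0_right)
  qed
qed

lemma T_rec:
  "T a d (Suc n) (Suc p) = (of_nat (p + 2) * d - a) * T a d n (Suc p)
     + (a + (real n - real p) * d) * T a d n p"
proof -
  define y where "y i = real (p + 2 - i) * d - a" for i
  define F where "F i = (-1) ^ i * y i ^ Suc n * real (Suc n choose i)" for i
  define G where "G i = (-1) ^ Suc i * y (Suc i) ^ Suc n * real (Suc n choose i)" for i
  define H where "H i = (-1) ^ i * y i ^ n * real (Suc n choose i) * (real i * d)" for i
  define K where "K i = (-1) ^ i * y (Suc i) ^ n * real (Suc n choose i) * ((real n + 1 - real i) * d)" for i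
  have L: "T a d (Suc n) (Suc p) = (\<Sum>i=0..Suc p. F i) + (\<Sum>i=0..p. G i)"
  proof -
    have "T a d (Suc n) (Suc p) = (\<Sum>i=0..Suc p. (-1) ^ i * y i ^ Suc n * real (Suc (Suc n) choose i))"
      unfolding T_def y_def by (rule sum.cong) (auto simp: add.commute)
    also have "\<dots> = (-1) ^ 0 * y 0 ^ Suc n * real (Suc (Suc n) choose 0) + (\<Sum>i=0..p. (-1) ^ Suc i * y (Suc i) ^ Suc n * real (Suc (Suc n) choose Suc i))"
      by (subst sum.atLeast0_atMost_Suc_shift) simp
    also have "\<dots> = F 0 + (\<Sum>i=0..p. F (Suc i) + G i)"
      unfolding F_def G_def by (simp add: algebra_simps)
    also have "\<dots> = (\<Sum>i=0..Suc p. F i) + (\<Sum>i=0..p. G i)"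
      using sum.atLeast0_atMost_Suc_shift[of F p] by (simp add: sum.distrib del: sum.atLeast0_atMost_Suc)
    finally show ?thesis .
  qed
  have R1: "(of_nat (p + 2) * d - a) * T a d n (Suc p) = (\<Sum>i=0..Suc p. F i) + (\<Sum>i=0..Suc p. H i)"
  proof -
    have "(of_nat (p + 2) * d - a) * T a d n (Suc p) = (\<Sum>i=0..Suc p. F i + H i)"
      unfolding T_def sum_distrib_left
    proof (rule sum.cong)
      fix i assume "i \<in> {0..Suc p}"
      then have i: "i \<le> Suc p" by simp
      then have e: "real (p + 2 - i) = real p + 2 - real i" by (simp add: of_nat_diff)
      have e2: "Suc p + 1 - i = p + 2 - i" by simp
      show "(of_nat (p + 2) * d - a) * ((- 1) ^ i * (of_nat (Suc p + 1 - i) * d - a) ^ n * of_nat (n + 1 choose i)) = F i + H i"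
        unfolding F_def H_def y_def e2 e by (simp add: algebra_simps)
    qed simp
    then show ?thesis by (simp add: sum.distrib)
  qed
  have R2: "(a + (real n - real p) * d) * T a d n p = (\<Sum>i=0..p. G i) + (\<Sum>i=0..p. K i)"
  proof -
    have "(a + (real n - real p) * d) * T a d n p = (\<Sum>i=0..p. G i + K i)"
      unfolding T_def sum_distrib_left
    proof (rule sum.cong)
      fix i assume "i \<in> {0..p}"
      then have i: "i \<le> p" by simp
      then have e: "real (p + 2 - Suc i) = real p + 1 - real i" by (simp add: of_nat_diff)
      have e2: "p + 1 - i = p + 2 - Suc i" by simp
      show "(a + (real n - real p) * d) * ((- 1) ^ i * (of_nat (p + 1 - i) * d - a) ^ n * of_nat (n + 1 choose i)) = G i + K i"
        unfolding G_def K_def y_def e2 e by (simp add: algebra_simps)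
    qed simp
    then show ?thesis by (simp add: sum.distrib)
  qed
  have Z: "(\<Sum>i=0..Suc p. H i) + (\<Sum>i=0..p. K i) = 0"
  proof -
    have "(\<Sum>i=0..Suc p. H i) = H 0 + (\<Sum>i=0..p. H (Suc i))"
      by (simp only: sum.atLeast0_atMost_Suc_shift o_def)
    also have "\<dots> = (\<Sum>i=0..p. - K i)"
    proof -
      have "H 0 = 0" unfolding H_def by simp
      moreover have "H (Suc i) = - K i" for i
      proof -
        have "H (Suc i) = (-1) ^ Suc i * y (Suc i) ^ n * d * (real (Suc i) * real (Suc n choose Suc i))"
          unfolding H_def by (simp add: algebra_simps)
        also have "\<dots> = (-1) ^ Suc i * y (Suc i) ^ n * d * ((real n + 1 - real i) * real (Suc n choose i))"
          by (simp only: choose_aux)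
        also have "\<dots> = - K i" unfolding K_def by (simp add: algebra_simps)
        finally show ?thesis .
      qed
      ultimately show ?thesis by simp
    qed
    finally show ?thesis by (simp add: sum_negf)
  qed
  show ?thesis using L R1 R2 Z by linarith
qed

lemma T_zero_base: "m \<ge> 1 \<Longrightarrow> T a d 0 m = 0"
proof -
  assume "m \<ge> 1"
  then obtain p where m: "m = Suc p" by (cases m) auto
  have "T a d 0 (Suc p) = (\<Sum>i=0..Suc p. (-1::real) ^ i * real (1 choose i))"
    unfolding T_def by simp
  also have "\<dots> = 1 + (\<Sum>i=0..p. (-1::real) ^ Suc i * real (1 choose Suc i))"
    by (subst sum.atLeast0_atMost_Suc_shift) simp
  also have "\<dots> = 1 + (\<Sum>i=0..p. (if i = 0 then -1 else 0))"
    by (rule arg_cong[where f="\<lambda>x. 1 + x"], rule sum.cong) (auto simp: binomial_eq_0)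
  also have "\<dots> = 0" by (simp add: sum.delta)
  finally show ?thesis using m by simp
qed

lemma T_vanish: "m \<ge> n + 1 \<Longrightarrow> T a d n m = 0"
proof (induction n arbitrary: m)
  case 0 then show ?case by (simp add: T_zero_base)
next
  case (Suc n)
  then obtain p where m: "m = Suc p" by (cases m) auto
  with Suc.prems have "p \<ge> n + 1" by simp
  then show ?case using m Suc.IH[of p] Suc.IH[of "Suc p"] by (simp add: T_rec)
qed

lemma ge_neg: "k \<le> -2 \<Longrightarrow> gen_eulerian a d n k = 0"
  by (cases n) auto

lemma main: "gen_eulerian a d n (int m - 1) = T a d n m"
proof (induction n arbitrary: m)
  case 0
  show ?case
  proof (cases m)
    case 0 then show ?thesis by (simp add: T_def)
  next
    case (Suc p) then show ?thesis by (simp add: T_zero_base)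
  qed
next
  case (Suc n)
  show ?case
  proof (cases m)
    case 0
    have "gen_eulerian a d (Suc n) (-1) = (d - a) * gen_eulerian a d n (-1)"
      by (simp add: ge_neg)
    also have "\<dots> = (d - a) * T a d n 0" using Suc.IH[of 0] by simp
    also have "\<dots> = T a d (Suc n) 0" by (simp add: T_def)
    finally show ?thesis using 0 by simp
  next
    case (Suc p)
    show ?thesis
    proof (cases "p \<ge> Suc n")
      case True
      then have "T a d (Suc n) m = 0" using Suc by (intro T_vanish) simp
      moreover have "gen_eulerian a d (Suc n) (int m - 1) = 0" using True Suc by simp
      ultimately show ?thesis by simp
    next
      case False
      have "gen_eulerian a d (Suc n) (int m - 1) =
         (- a + of_int (int p + 2) * d) * gen_eulerian a d n (int (Suc p) - 1)
         + (a + of_int (int (Suc n) - int p - 1) * d) * gen_eulerian a d n (int p - 1)"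
        using False Suc by (simp add: algebra_simps)
      also have "\<dots> = (of_nat (p + 2) * d - a) * T a d n (Suc p) + (a + (real n - real p) * d) * T a d n p"
        using Suc.IH[of p] Suc.IH[of "Suc p"] by (simp add: algebra_simps)
      also have "\<dots> = T a d (Suc n) m" using Suc by (simp add: T_rec)
      finally show ?thesis .
    qed
  qed
qed

theorem lemma2p5:
  fixes a d :: real and n :: nat and k :: int
  assumes "-1 \<le> k" and "k \<le> int n - 1"
  shows "gen_eulerian a d n k =
    (\<Sum>i = 0..nat (k + 1). (-1) ^ i * (of_int (k + 2 - int i) * d - a) ^ n * of_nat ((n + 1) choose i))"
proof -
  define m where "m = nat (k + 1)"
  have k: "k = int m - 1" using assms m_def by simp
  have "gen_eulerian a d n k = T a d n m" using main k by simp
  also have "\<dots> = (\<Sum>i = 0..m. (-1) ^ i * (of_int (k + 2 - int i) * d - a) ^ n * of_nat ((n + 1) choose i))"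
    unfolding T_def
  proof (rule sum.cong)
    fix i assume "i \<in> {0..m}"
    then have "i \<le> m" by simp
    then have "of_nat (m + 1 - i) = (of_int (k + 2 - int i) :: real)" using k by (simp add: of_nat_diff)
    then show "(-1) ^ i * (of_nat (m + 1 - i) * d - a) ^ n * of_nat ((n + 1) choose i) =
      (-1) ^ i * (of_int (k + 2 - int i) * d - a) ^ n * of_nat ((n + 1) choose i)" by simp
  qed simp
  finally show ?thesis unfolding m_def .
qed

end
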